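(* Let $(M,T^{1,0}M)$ be a strictly pseudoconvex CR manifold of dimension three. For a contact form $\theta$ and $u\in C^\infty(M)$, define $$d^c_{\mathrm{CR}}u=\frac{\sqrt{-1}}2\big(u_{\bar1}\theta^{\bar1}-u_1\theta^1\big)+\frac12(\Delta_bu)\,\theta.$$ Then the operator $d^c_{\mathrm{CR}}\colon C^\infty(M)\to\Omega^1(M)$ is independent of the choice of contact form $\theta$ (and of the local frame).
   Context: $(M,T^{1,0}M)$: smooth 3-manifold with a complex line subbundle $T^{1,0}M\subset TM\otimes\mathbb C$, $T^{1,0}M\cap\overline{T^{1,0}M}=0$. A contact form is a nowhere vanishing real 1-form $\theta$ annihilating $T^{1,0}M$ with $-\sqrt{-1}d\theta(Z,\bar Z)>0$ for $0\ne Z\in T^{1,0}M$. For a contact form $\theta$ with Reeb field $T$ ($\theta(T)=1,\iota_Td\theta=0$), a local frame $Z_1$ of $T^{1,0}M$, $Z_{\bar1}=\overline{Z_1}$, $(\theta,\theta^1,\theta^{\bar1})$ is the coframe dual to $(T,Z_1,Z_{\bar1})$, $d\theta=\sqrt{-1}l_{1\bar1}\theta^1\wedge\theta^{\bar1}$, and indices are raised/lowered with $l_{1\bar1}$. $u_1=Z_1u$, $u_{\bar1}=Z_{\bar1}u$, and second subscripts denote Tanaka–Webster covariant derivatives ($\nabla T=0$, $\nabla Z_1=\omega_1{}^1Z_1$ with $d\theta^1=\theta^1\wedge\omega_1{}^1+A^1{}_{\bar1}\theta\wedge\theta^{\bar1}$, $dl_{1\bar1}=\omega_1{}^1l_{1\bar1}+l_{1\bar1}\overline{\omega_1{}^1}$).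 The sub-Laplacian is $\Delta_bu=-u_{\bar1}{}^{\bar1}-u_1{}^1$. *)

theory Defs
  imports "HOL-Analysis.Analysis"
begin

text \<open>Local model: an open set U in R^3 (a coordinate chart of the 3-manifold M).
Complex vector fields and complex 1-forms are given by their coefficient vectors
in complex^3 with respect to the coordinate frame d/dx_i resp. coframe dx_i.\<close>

definition partial :: "3 \<Rightarrow> (real^3 \<Rightarrow> complex) \<Rightarrow> real^3 \<Rightarrow> complex" where
  "partial i g p = vector_derivative (\<lambda>t::real. g (p + t *\<^sub>R axis i 1)) (at 0)"

fun iter_partial :: "3 list \<Rightarrow> (real^3 \<Rightarrow> complex) \<Rightarrow> real^3 \<Rightarrow> complex" where
  "iter_partial [] g = g"
| "iter_partial (i # is) g = partial i (iter_partial is g)"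

definition smooth_on :: "(real^3) set \<Rightarrow> (real^3 \<Rightarrow> complex) \<Rightarrow> bool" where
  "smooth_on U g \<longleftrightarrow> (\<forall>is. \<forall>p\<in>U. iter_partial is g differentiable (at p))"

definition smooth_field :: "(real^3) set \<Rightarrow> (real^3 \<Rightarrow> complex^3) \<Rightarrow> bool" where
  "smooth_field U X \<longleftrightarrow> (\<forall>i. smooth_on U (\<lambda>p. X p $ i))"

definition pair :: "complex^3 \<Rightarrow> complex^3 \<Rightarrow> complex" where
  "pair a v = (\<Sum>i\<in>UNIV. a $ i * v $ i)"

definition cconj :: "complex^3 \<Rightarrow> complex^3" where
  "cconj v = (\<chi> i. cnj (v $ i))"

definition dfun :: "(real^3 \<Rightarrow> complex) \<Rightarrow> real^3 \<Rightarrow> complex^3 \<Rightarrow> complex" where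
  "dfun g p v = (\<Sum>i\<in>UNIV. v $ i * partial i g p)"

definition vf :: "(real^3 \<Rightarrow> complex^3) \<Rightarrow> (real^3 \<Rightarrow> complex) \<Rightarrow> real^3 \<Rightarrow> complex" where
  "vf X g p = dfun g p (X p)"

text \<open>Exterior derivative of a 1-form evaluated on two vectors, and wedge of 1-forms,
with the convention (a \<and> b)(v,w) = a(v)b(w) - a(w)b(v).\<close>
definition dform :: "(real^3 \<Rightarrow> complex^3) \<Rightarrow> real^3 \<Rightarrow> complex^3 \<Rightarrow> complex^3 \<Rightarrow> complex" where
  "dform a p v w = (\<Sum>i\<in>UNIV. \<Sum>j\<in>UNIV.
      (partial i (\<lambda>q. a q $ j) p - partial j (\<lambda>q. a q $ i) p) * v $ i * w $ j)"

definition wedge :: "complex^3 \<Rightarrow> complex^3 \<Rightarrow> complex^3 \<Rightarrow> complex^3 \<Rightarrow> complex" where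
  "wedge a b v w = pair a v * pair b w - pair a w * pair b v"

text \<open>Z is a local frame of a CR structure T^{1,0} (complex line bundle with
T^{1,0} \<inter> conj T^{1,0} = 0) on U.\<close>
definition CR_frame :: "(real^3) set \<Rightarrow> (real^3 \<Rightarrow> complex^3) \<Rightarrow> bool" where
  "CR_frame U Z \<longleftrightarrow> smooth_field U Z \<and>
     (\<forall>p\<in>U. \<forall>a b::complex. a *s Z p + b *s cconj (Z p) = 0 \<longrightarrow> a = 0 \<and> b = 0)"

text \<open>l_{1 1bar}, determined by d theta = i l theta^1 \<and> theta^{1bar} (evaluated at (Z, Zbar)).\<close>
definition levi :: "(real^3 \<Rightarrow> complex^3) \<Rightarrow> (real^3 \<Rightarrow> complex^3) \<Rightarrow> real^3 \<Rightarrow> complex" where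
  "levi \<theta> Z p = - \<i> * dform \<theta> p (Z p) (cconj (Z p))"

definition contact_form :: "(real^3) set \<Rightarrow> (real^3 \<Rightarrow> complex^3) \<Rightarrow> (real^3 \<Rightarrow> complex^3) \<Rightarrow> bool" where
  "contact_form U Z \<theta> \<longleftrightarrow> smooth_field U \<theta> \<and>
     (\<forall>p\<in>U. (\<forall>i. \<theta> p $ i \<in> \<real>) \<and> \<theta> p \<noteq> 0 \<and> pair (\<theta> p) (Z p) = 0 \<and>
       (\<forall>c::complex. c \<noteq> 0 \<longrightarrow>
          (let W = c *s Z p in - \<i> * dform \<theta> p W (cconj W) \<in> \<real> \<and> Re (- \<i> * dform \<theta> p W (cconj W)) > 0)))"

definition reeb_field :: "(real^3) set \<Rightarrow> (real^3 \<Rightarrow> complex^3) \<Rightarrow> (real^3 \<Rightarrow> complex^3) \<Rightarrow> bool" where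
  "reeb_field U \<theta> T \<longleftrightarrow> smooth_field U T \<and>
     (\<forall>p\<in>U. (\<forall>i. T p $ i \<in> \<real>) \<and> pair (\<theta> p) (T p) = 1 \<and> (\<forall>w. dform \<theta> p (T p) w = 0))"

text \<open>theta^1 such that (theta, theta^1, theta^{1bar} = conj theta^1) is dual to (T, Z, Zbar).\<close>
definition dual_coframe :: "(real^3) set \<Rightarrow> (real^3 \<Rightarrow> complex^3) \<Rightarrow> (real^3 \<Rightarrow> complex^3)
     \<Rightarrow> (real^3 \<Rightarrow> complex^3) \<Rightarrow> bool" where
  "dual_coframe U Z T \<theta>1 \<longleftrightarrow> smooth_field U \<theta>1 \<and>
     (\<forall>p\<in>U. pair (\<theta>1 p) (T p) = 0 \<and> pair (\<theta>1 p) (Z p) = 1 \<and> pair (\<theta>1 p) (cconj (Z p)) = 0)"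

text \<open>Tanaka--Webster connection form omega_1^1 and torsion A^1_{1bar}:
 d theta^1 = theta^1 \<and> omega + A theta \<and> theta^{1bar},  dl = omega l + l conj(omega).\<close>
definition TW_connection :: "(real^3) set \<Rightarrow> (real^3 \<Rightarrow> complex^3) \<Rightarrow> (real^3 \<Rightarrow> complex^3)
     \<Rightarrow> (real^3 \<Rightarrow> complex^3) \<Rightarrow> (real^3 \<Rightarrow> complex^3) \<Rightarrow> (real^3 \<Rightarrow> complex) \<Rightarrow> bool" where
  "TW_connection U Z \<theta> \<theta>1 \<omega> A \<longleftrightarrow> smooth_field U \<omega> \<and> smooth_on U A \<and>
     (\<forall>p\<in>U. (\<forall>v w. dform \<theta>1 p v w = wedge (\<theta>1 p) (\<omega> p) v w + A p * wedge (\<theta> p) (cconj (\<theta>1 p)) v w) \<and>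
       (\<forall>v. dfun (levi \<theta> Z) p v = pair (\<omega> p) v * levi \<theta> Z p + levi \<theta> Z p * pair (cconj (\<omega> p)) v))"

definition pseudohermitian_data :: "(real^3) set \<Rightarrow> (real^3 \<Rightarrow> complex^3) \<Rightarrow> (real^3 \<Rightarrow> complex^3)
     \<Rightarrow> (real^3 \<Rightarrow> complex^3) \<Rightarrow> (real^3 \<Rightarrow> complex^3) \<Rightarrow> (real^3 \<Rightarrow> complex^3) \<Rightarrow> (real^3 \<Rightarrow> complex) \<Rightarrow> bool" where
  "pseudohermitian_data U Z \<theta> T \<theta>1 \<omega> A \<longleftrightarrow>
     contact_form U Z \<theta> \<and> reeb_field U \<theta> T \<and> dual_coframe U Z T \<theta>1 \<and> TW_connection U Z \<theta> \<theta>1 \<omega> A"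

text \<open>Tanaka--Webster second covariant derivatives of a function cu:
 u_{1 1bar} = Zbar Z u - omega_1^1(Zbar) Z u,  u_{1bar 1} = Z Zbar u - omega_{1bar}^{1bar}(Z) Zbar u,
 with omega_{1bar}^{1bar} = conj omega_1^1; indices raised with l^{1 1bar} = 1/l.\<close>
definition sublaplacian :: "(real^3 \<Rightarrow> complex^3) \<Rightarrow> (real^3 \<Rightarrow> complex^3) \<Rightarrow> (real^3 \<Rightarrow> complex^3)
     \<Rightarrow> (real^3 \<Rightarrow> complex) \<Rightarrow> real^3 \<Rightarrow> complex" where
  "sublaplacian Z \<theta> \<omega> cu p =
     (let Zb = (\<lambda>q. cconj (Z q));
          u11b = vf Zb (vf Z cu) p - pair (\<omega> p) (Zb p) * vf Z cu p;
          u1b1 = vf Z (vf Zb cu) p - pair (cconj (\<omega> p)) (Z p) * vf Zb cu p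
      in - (u1b1 / levi \<theta> Z p + u11b / levi \<theta> Z p))"

definition dcCR :: "(real^3 \<Rightarrow> complex^3) \<Rightarrow> (real^3 \<Rightarrow> complex^3) \<Rightarrow> (real^3 \<Rightarrow> complex^3)
     \<Rightarrow> (real^3 \<Rightarrow> complex^3) \<Rightarrow> (real^3 \<Rightarrow> real) \<Rightarrow> real^3 \<Rightarrow> complex^3" where
  "dcCR Z \<theta> \<theta>1 \<omega> u p =
     (let cu = (\<lambda>q. complex_of_real (u q));
          u1 = vf Z cu p; u1b = vf (\<lambda>q. cconj (Z q)) cu p
      in (\<i> / 2) *s (u1b *s cconj (\<theta>1 p) - u1 *s \<theta>1 p) + (sublaplacian Z \<theta> \<omega> cu p / 2) *s \<theta> p)"

end

theory Submission
  imports Defs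
begin

lemma partial_has:
  assumes "g differentiable (at p)"
  shows "((\<lambda>t. g (p + t *\<^sub>R axis i 1)) has_vector_derivative partial i g p) (at 0)"
proof -
  have l: "(\<lambda>t::real. p + t *\<^sub>R axis i (1::real)) differentiable (at 0)"
    by (intro derivative_intros)
  have "(\<lambda>t. g (p + t *\<^sub>R axis i 1)) differentiable (at 0)"
    using differentiable_chain_at[OF l, of g] assms by (simp add: o_def)
  then show ?thesis unfolding partial_def by (simp add: vector_derivative_works[symmetric])
qed

lemma partial_local:
  assumes "open U" "p \<in> U" "\<forall>q\<in>U. f q = g q"
  shows "partial i f p = partial i g p"
proof -
  obtain e where e: "e > 0" "ball p e \<subseteq> U" using assms open_contains_ball by blast
  have "eventually (\<lambda>t::real. t \<in> UNIV \<longrightarrow> f (p + t *\<^sub>R axis i 1) = g (p + t *\<^sub>R axis i 1)) (nhds 0)"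
    unfolding eventually_nhds_metric
  proof (intro exI[of _ e] conjI allI impI)
    fix t :: real assume "dist t 0 < e"
    then have "p + t *\<^sub>R axis i 1 \<in> ball p e" by (simp add: dist_norm)
    then show "f (p + t *\<^sub>R axis i 1) = g (p + t *\<^sub>R axis i 1)" using e assms by auto
  qed (use e in auto)
  then show ?thesis unfolding partial_def by (intro vector_derivative_cong_eq) auto
qed

lemma partial_mult:
  assumes "f differentiable (at p)" "g differentiable (at p)"
  shows "partial i (\<lambda>q. f q * g q) p = f p * partial i g p + partial i f p * g p"
proof -
  have "((\<lambda>t. f (p + t *\<^sub>R axis i 1) * g (p + t *\<^sub>R axis i 1)) has_vector_derivative
     (f p * partial i g p + partial i f p * g p)) (at 0)"
    using has_vector_derivative_mult[OF partial_has[OF assms(1)] partial_has[OF assms(2)]] by simp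
  then show ?thesis unfolding partial_def by (rule vector_derivative_at)
qed

lemma partial_add:
  assumes "f differentiable (at p)" "g differentiable (at p)"
  shows "partial i (\<lambda>q. f q + g q) p = partial i f p + partial i g p"
proof -
  have "((\<lambda>t. f (p + t *\<^sub>R axis i 1) + g (p + t *\<^sub>R axis i 1)) has_vector_derivative
     (partial i f p + partial i g p)) (at 0)"
    using has_vector_derivative_add[OF partial_has[OF assms(1)] partial_has[OF assms(2)]] by simp
  then show ?thesis unfolding partial_def by (rule vector_derivative_at)
qed

lemma partial_cnj:
  assumes "f differentiable (at p)"
  shows "partial i (\<lambda>q. cnj (f q)) p = cnj (partial i f p)"
proof -
  have "((\<lambda>t. cnj (f (p + t *\<^sub>R axis i 1))) has_vector_derivative cnj (partial i f p)) (at 0)"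
    using has_vector_derivative_cnj[OF partial_has[OF assms(1)]] by simp
  then show ?thesis unfolding partial_def by (rule vector_derivative_at)
qed

lemma partial_const: "partial i (\<lambda>q. c) p = 0"
  unfolding partial_def by (rule vector_derivative_at) (rule has_vector_derivative_const)


lemma pair_cconj_cconj: "pair (cconj a) (cconj v) = cnj (pair a v)"
  by (simp add: pair_def cconj_def)
lemma pair_cconj_left: "pair (cconj a) v = cnj (pair a (cconj v))"
  by (simp add: pair_def cconj_def)
lemma cconj_cconj[simp]: "cconj (cconj v) = v"
  by (simp add: cconj_def vec_eq_iff)
lemma pair_scale_right: "pair a (c *s v) = c * pair a v"
  by (simp add: pair_def sum_distrib_left algebra_simps)
lemma pair_scale_left: "pair (c *s a) v = c * pair a v"
  by (simp add: pair_def sum_distrib_left algebra_simps)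
lemma pair_add_right: "pair a (v + w) = pair a v + pair a w"
  by (simp add: pair_def sum.distrib algebra_simps)
lemma pair_add_left: "pair (a + b) v = pair a v + pair b v"
  by (simp add: pair_def sum.distrib algebra_simps)
lemma cconj_scale: "cconj (c *s v) = cnj c *s cconj v"
  by (simp add: cconj_def vec_eq_iff)
lemma cconj_add: "cconj (v + w) = cconj v + cconj w"
  by (simp add: cconj_def vec_eq_iff)
lemma pair_axis: "pair a (axis j 1) = a $ j"
  by (simp add: pair_def axis_def if_distrib cong: if_cong)
lemma real_cconj: "(\<forall>i. v $ i \<in> \<real>) \<Longrightarrow> cconj v = v"
  by (simp add: cconj_def vec_eq_iff Reals_cnj_iff)

lemma decomp:
  fixes T Z th th1 v :: "complex^3"
  assumes "pair th T = 1" "pair th Z = 0" "pair th (cconj Z) = 0" "pair th1 T = 0" "pair th1 Z = 1"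
    "pair th1 (cconj Z) = 0" "cconj T = T"
  shows "v = pair th v *s T + pair th1 v *s Z + pair (cconj th1) v *s cconj Z"
proof -
  define M :: "complex^3^3" where "M = vector [th, th1, cconj th1]"
  define N :: "complex^3^3" where "N = transpose (vector [T, Z, cconj Z])"
  have p1: "pair (cconj th1) T = 0" "pair (cconj th1) Z = 0" "pair (cconj th1) (cconj Z) = 1"
    using assms by (simp_all add: pair_cconj_left)
  have "M ** N = mat 1"
    unfolding M_def N_def matrix_matrix_mult_def mat_def transpose_def
    using assms p1 by (simp add: vec_eq_iff forall_3 pair_def)
  then have NM: "N ** M = mat 1" by (simp add: matrix_left_right_inverse)
  have "v = (N ** M) *v v" by (simp add: NM)
  also have "\<dots> = N *v (M *v v)" by (simp add: matrix_vector_mul_assoc)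
  also have "\<dots> = pair th v *s T + pair th1 v *s Z + pair (cconj th1) v *s cconj Z"
    unfolding M_def N_def matrix_vector_mult_def transpose_def
    by (simp add: vec_eq_iff sum_3 pair_def algebra_simps)
  finally show ?thesis .
qed


lemma smooth_on_diff: "smooth_on U g \<Longrightarrow> p \<in> U \<Longrightarrow> g differentiable (at p)"
  unfolding smooth_on_def by (metis iter_partial.simps(1))
lemma smooth_on_partial_diff: "smooth_on U g \<Longrightarrow> p \<in> U \<Longrightarrow> partial i g differentiable (at p)"
  unfolding smooth_on_def by (metis iter_partial.simps)
lemma field_diff: "smooth_field U X \<Longrightarrow> p \<in> U \<Longrightarrow> (\<lambda>q. X q $ j) differentiable (at p)"
  unfolding smooth_field_def using smooth_on_diff by blast
lemma field_cconj_diff: "smooth_field U X \<Longrightarrow> p \<in> U \<Longrightarrow> (\<lambda>q. cconj (X q) $ j) differentiable (at p)"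
  unfolding cconj_def using field_diff[of U X p j] by (simp add: differentiable_cnj_iff)
lemma pair_diff:
  assumes "\<And>j. (\<lambda>q. a q $ j) differentiable (at p)" "\<And>j. (\<lambda>q. b q $ j) differentiable (at p)"
  shows "(\<lambda>q. pair (a q) (b q)) differentiable (at p)"
  unfolding pair_def using assms by (intro differentiable_sum differentiable_mult) auto
lemma vf_diff:
  assumes "\<And>j. (\<lambda>q. X q $ j) differentiable (at p)" "\<And>j. partial j g differentiable (at p)"
  shows "vf X g differentiable (at p)"
proof -
  have "vf X g = (\<lambda>q. \<Sum>i\<in>UNIV. X q $ i * partial i g q)" by (simp add: vf_def dfun_def fun_eq_iff)
  then show ?thesis using assms by (auto intro!: differentiable_sum differentiable_mult)
qed

lemma dfun_scale: "dfun g p (c *s v) = c * dfun g p v"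
  by (simp add: dfun_def sum_distrib_left algebra_simps)
lemma dfun_add: "dfun g p (v + w) = dfun g p v + dfun g p w"
  by (simp add: dfun_def sum.distrib algebra_simps)
lemma dfun_const: "dfun (\<lambda>q. c) p v = 0"
  by (simp add: dfun_def partial_const)
lemma dfun_local: "open U \<Longrightarrow> p \<in> U \<Longrightarrow> \<forall>q\<in>U. f q = g q \<Longrightarrow> dfun f p v = dfun g p v"
  unfolding dfun_def using partial_local by metis
lemma dfun_mult: "f differentiable (at p) \<Longrightarrow> g differentiable (at p) \<Longrightarrow>
   dfun (\<lambda>q. f q * g q) p v = f p * dfun g p v + dfun f p v * g p"
  by (simp add: dfun_def partial_mult sum.distrib sum_distrib_left sum_distrib_right algebra_simps)
lemma dfun_cnj: "f differentiable (at p) \<Longrightarrow> dfun (\<lambda>q. cnj (f q)) p (cconj v) = cnj (dfun f p v)"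
  by (simp add: dfun_def partial_cnj cconj_def)

lemma dform_add1: "dform a p (v + v') w = dform a p v w + dform a p v' w"
  by (simp add: dform_def sum_3 algebra_simps)
lemma dform_scale1: "dform a p (c *s v) w = c * dform a p v w"
  by (simp add: dform_def sum_3 algebra_simps)
lemma dform_add2: "dform a p v (w + w') = dform a p v w + dform a p v w'"
  by (simp add: dform_def sum_3 algebra_simps)
lemma dform_scale2: "dform a p v (c *s w) = c * dform a p v w"
  by (simp add: dform_def sum_3 algebra_simps)
lemma dform_antisym: "dform a p v w = - dform a p w v"
  unfolding dform_def by (simp add: sum_3 algebra_simps)

lemma dform_lin:
  assumes "open U" "p \<in> U" "\<forall>q\<in>U. b q = f q *s a q + g q *s c q"
    "f differentiable (at p)" "g differentiable (at p)"
    "\<And>j. (\<lambda>q. a q $ j) differentiable (at p)" "\<And>j. (\<lambda>q. c q $ j) differentiable (at p)"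
  shows "dform b p v w = f p * dform a p v w + (dfun f p v * pair (a p) w - dfun f p w * pair (a p) v)
     + g p * dform c p v w + (dfun g p v * pair (c p) w - dfun g p w * pair (c p) v)"
proof -
  have pj: "partial i (\<lambda>q. b q $ j) p = f p * partial i (\<lambda>q. a q $ j) p + partial i f p * a p $ j
     + (g p * partial i (\<lambda>q. c q $ j) p + partial i g p * c p $ j)" for i j
  proof -
    have "partial i (\<lambda>q. b q $ j) p = partial i (\<lambda>q. f q * a q $ j + g q * c q $ j) p"
      using assms(1,2,3) by (intro partial_local) auto
    also have "\<dots> = partial i (\<lambda>q. f q * a q $ j) p + partial i (\<lambda>q. g q * c q $ j) p"
      using assms by (intro partial_add) auto
    also have "\<dots> = f p * partial i (\<lambda>q. a q $ j) p + partial i f p * a p $ j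
     + (g p * partial i (\<lambda>q. c q $ j) p + partial i g p * c p $ j)"
      using assms by (simp add: partial_mult)
    finally show ?thesis .
  qed
  show ?thesis
    unfolding dform_def pj dfun_def pair_def by (simp add: sum_3 algebra_simps)
qed


locale frame =
  fixes U :: "(real^3) set" and Z \<theta> T \<theta>1 \<omega> :: "real^3 \<Rightarrow> complex^3" and A :: "real^3 \<Rightarrow> complex"
  assumes opn: "open U" and cr: "CR_frame U Z" and ph: "pseudohermitian_data U Z \<theta> T \<theta>1 \<omega> A"
begin

lemma cf: "contact_form U Z \<theta>" and rf: "reeb_field U \<theta> T" and dc: "dual_coframe U Z T \<theta>1"
  and tw: "TW_connection U Z \<theta> \<theta>1 \<omega> A"
  using ph by (auto simp: pseudohermitian_data_def)

lemma sm: "smooth_field U Z" "smooth_field U \<theta>" "smooth_field U T" "smooth_field U \<theta>1"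
  using cr cf rf dc by (auto simp: CR_frame_def contact_form_def reeb_field_def dual_coframe_def)

context fixes q assumes q: "q \<in> U" begin

lemma th_real: "cconj (\<theta> q) = \<theta> q" using cf q by (auto simp: contact_form_def intro: real_cconj)
lemma T_real: "cconj (T q) = T q" using rf q by (auto simp: reeb_field_def intro: real_cconj)
lemma thT: "pair (\<theta> q) (T q) = 1" using rf q by (auto simp: reeb_field_def)
lemma thZ: "pair (\<theta> q) (Z q) = 0" using cf q by (auto simp: contact_form_def)
lemma thZb: "pair (\<theta> q) (cconj (Z q)) = 0"
  using thZ th_real pair_cconj_cconj[of "\<theta> q" "Z q"] by simp
lemma th_nz: "\<theta> q \<noteq> 0" using cf q by (auto simp: contact_form_def)
lemma th1T: "pair (\<theta>1 q) (T q) = 0" and th1Z: "pair (\<theta>1 q) (Z q) = 1"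
  and th1Zb: "pair (\<theta>1 q) (cconj (Z q)) = 0" using dc q by (auto simp: dual_coframe_def)
lemma reeb: "dform \<theta> q (T q) w = 0" using rf q by (auto simp: reeb_field_def)

lemma levi_prop: "levi \<theta> Z q \<in> \<real>" "Re (levi \<theta> Z q) > 0"
proof -
  have "let W = 1 *s Z q in - \<i> * dform \<theta> q W (cconj W) \<in> \<real> \<and> Re (- \<i> * dform \<theta> q W (cconj W)) > 0"
    using cf q unfolding contact_form_def by (metis one_neq_zero)
  then show "levi \<theta> Z q \<in> \<real>" "Re (levi \<theta> Z q) > 0" by (simp_all add: Let_def levi_def)
qed
lemma levi_nz: "levi \<theta> Z q \<noteq> 0" using levi_prop by auto
lemma levi_cnj: "cnj (levi \<theta> Z q) = levi \<theta> Z q" using levi_prop Reals_cnj_iff by blast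
lemma dthZZb: "dform \<theta> q (Z q) (cconj (Z q)) = \<i> * levi \<theta> Z q"
  by (simp add: levi_def)

lemma omega_eq: "pair (\<omega> q) (cconj (Z q)) = dform \<theta>1 q (Z q) (cconj (Z q))"
proof -
  have "dform \<theta>1 q (Z q) (cconj (Z q)) = wedge (\<theta>1 q) (\<omega> q) (Z q) (cconj (Z q))
      + A q * wedge (\<theta> q) (cconj (\<theta>1 q)) (Z q) (cconj (Z q))"
    using tw q by (auto simp: TW_connection_def)
  then show ?thesis using th1Z th1Zb thZ thZb by (simp add: wedge_def)
qed

lemma decompv: "v = pair (\<theta> q) v *s T q + pair (\<theta>1 q) v *s Z q + pair (cconj (\<theta>1 q)) v *s cconj (Z q)"
  by (rule decomp[OF thT thZ thZb th1T th1Z th1Zb T_real])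

lemma cov: "pair a v = pair (\<theta> q) v * pair a (T q) + pair (\<theta>1 q) v * pair a (Z q)
     + pair (cconj (\<theta>1 q)) v * pair a (cconj (Z q))"
  by (subst decompv[of v]) (simp add: pair_add_right pair_scale_right)

lemma cov_eq: "a = pair a (T q) *s \<theta> q + pair a (Z q) *s \<theta>1 q + pair a (cconj (Z q)) *s cconj (\<theta>1 q)"
proof (subst vec_eq_iff, intro allI)
  fix j
  have "a $ j = pair a (axis j 1)" by (simp add: pair_axis)
  also have "\<dots> = (pair a (T q) *s \<theta> q + pair a (Z q) *s \<theta>1 q + pair a (cconj (Z q)) *s cconj (\<theta>1 q)) $ j"
    by (subst cov) (simp add: pair_axis)
  finally show "a $ j = \<dots>" .
qed

end
end


lemma alg:
  fixes l lam c h a W Zbc X Y u1 u1b :: complex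
  assumes "l \<noteq> 0" "lam \<noteq> 0" "c \<noteq> 0" "cnj l = l" "cnj lam = lam"
    and hc: "c * h = \<i> * cnj a / (lam * l)"
    and W': "W' = cnj c * (W + Zbc / c - cnj a / lam)"
  shows "\<i>/2 * (cnj c * cnj h * u1b - c * h * u1)
     + lam * (- ((c * (cnj c * Y + cnj Zbc * u1b) - cnj W' * (cnj c * u1b)) / (c * cnj c * lam * l)
               + (cnj c * (c * X + Zbc * u1) - W' * (c * u1)) / (c * cnj c * lam * l))) / 2
   = (- ((Y - cnj W * u1b) / l + (X - W * u1) / l)) / 2"
proof -
  have hc': "cnj c * cnj h = - \<i> * a / (lam * l)"
    using arg_cong[OF hc, of cnj] assms(4,5) by simp
  have cc: "cnj c \<noteq> 0" using assms(3) by simp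
  have cW: "cnj W' = c * (cnj W + cnj Zbc / cnj c - a / lam)" using W' assms(5) by simp
  have E1: "(c * (cnj c * Y + cnj Zbc * u1b) - cnj W' * (cnj c * u1b)) / (c * cnj c * lam * l)
      = (Y - cnj W * u1b + a * u1b / lam) / (lam * l)"
    unfolding cW using assms(1,2,3) cc by (simp add: field_simps)
  have E2: "(cnj c * (c * X + Zbc * u1) - W' * (c * u1)) / (c * cnj c * lam * l)
      = (X - W * u1 + cnj a * u1 / lam) / (lam * l)"
    unfolding W' using assms(1,2,3) cc by (simp add: field_simps)
  show ?thesis unfolding E1 E2 hc hc' using assms(1,2)
    by (simp add: field_simps)
qed


lemma alg2:
  fixes cp g h u1 u1b t t1 t1b Dp D lam :: complex
  assumes "cp * g = 1" "\<i>/2 * (cnj cp * cnj h * u1b - cp * h * u1) + lam * Dp / 2 = D / 2"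
  shows "\<i>/2 * (cnj cp * u1b * (cnj g * t1b + cnj h * t) - cp * u1 * (g * t1 + h * t)) + Dp/2 * (lam * t)
     = \<i>/2 * (u1b * t1b - u1 * t1) + D/2 * t"
proof -
  have c1: "cnj cp * cnj g = 1" using arg_cong[OF assms(1), of cnj] by simp
  have "\<i>/2 * (cnj cp * u1b * (cnj g * t1b + cnj h * t) - cp * u1 * (g * t1 + h * t)) + Dp/2 * (lam * t)
     = \<i>/2 * (u1b * t1b * (cnj cp * cnj g) - u1 * t1 * (cp * g))
       + t * (\<i>/2 * (cnj cp * cnj h * u1b - cp * h * u1) + lam * Dp / 2)"
    by (simp add: algebra_simps)
  also have "\<dots> = \<i>/2 * (u1b * t1b - u1 * t1) + D/2 * t" unfolding c1 assms(1) assms(2) by simp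
  finally show ?thesis .
qed


theorem lemma3p1:
  fixes U :: "(real^3) set"
    and Z Z' \<theta> \<theta>' T T' \<theta>1 \<theta>1' \<omega> \<omega>' :: "real^3 \<Rightarrow> complex^3"
    and A A' :: "real^3 \<Rightarrow> complex"
    and u :: "real^3 \<Rightarrow> real"
  assumes "open U"
    and "CR_frame U Z"
    and "CR_frame U Z'"
    and "\<forall>p\<in>U. \<exists>c::complex. c \<noteq> 0 \<and> Z' p = c *s Z p"
    and "pseudohermitian_data U Z \<theta> T \<theta>1 \<omega> A"
    and "pseudohermitian_data U Z' \<theta>' T' \<theta>1' \<omega>' A'"
    and "smooth_on U (\<lambda>p. complex_of_real (u p))"
  shows "\<forall>p\<in>U. dcCR Z \<theta> \<theta>1 \<omega> u p = dcCR Z' \<theta>' \<theta>1' \<omega>' u p"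
proof -
  interpret F1: frame U Z \<theta> T \<theta>1 \<omega> A using assms by unfold_locales
  interpret F2: frame U Z' \<theta>' T' \<theta>1' \<omega>' A' using assms by unfold_locales
  define c where "c q = pair (\<theta>1 q) (Z' q)" for q
  have Zc: "Z' q = c q *s Z q" if q: "q \<in> U" for q
  proof -
    obtain c0 where "Z' q = c0 *s Z q" using assms(4) q by blast
    moreover then have "c q = c0" using F1.th1Z[OF q] by (simp add: c_def pair_scale_right)
    ultimately show ?thesis by simp
  qed
  have cnz: "c q \<noteq> 0" if q: "q \<in> U" for q
  proof
    assume "c q = 0"
    then have "1 *s Z' q + 0 *s cconj (Z' q) = 0" using Zc[OF q] by (simp add: vec_eq_iff)
    moreover have "\<forall>a b. a *s Z' q + b *s cconj (Z' q) = 0 \<longrightarrow> a = 0 \<and> b = 0"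
      using assms(3) q unfolding CR_frame_def by blast
    ultimately show False by (metis one_neq_zero)
  qed
  have Zbc: "cconj (Z' q) = cnj (c q) *s cconj (Z q)" if q: "q \<in> U" for q
    using Zc[OF q] by (simp add: cconj_scale)
  define lam where "lam q = pair (\<theta>' q) (T q)" for q
  have thl: "\<theta>' q = lam q *s \<theta> q" if q: "q \<in> U" for q
  proof -
    have "pair (\<theta>' q) (Z q) = 0" using F2.thZ[OF q] cnz[OF q] by (simp add: Zc[OF q] pair_scale_right)
    moreover have "pair (\<theta>' q) (cconj (Z q)) = 0"
      using F2.thZb[OF q] cnz[OF q] by (simp add: Zbc[OF q] pair_scale_right)
    ultimately show ?thesis using F1.cov_eq[OF q, of "\<theta>' q"] by (simp add: lam_def)
  qed
  have lam_real: "cnj (lam q) = lam q" if q: "q \<in> U" for q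
    unfolding lam_def using pair_cconj_cconj[of "\<theta>' q" "T q"] F2.th_real[OF q] F1.T_real[OF q] by simp
  have lam_nz: "lam q \<noteq> 0" if q: "q \<in> U" for q
    using thl[OF q] F2.th_nz[OF q] by auto
  define g where "g q = pair (\<theta>1' q) (Z q)" for q
  define h where "h q = pair (\<theta>1' q) (T q)" for q
  have th1': "\<theta>1' q = g q *s \<theta>1 q + h q *s \<theta> q" if q: "q \<in> U" for q
  proof -
    have "pair (\<theta>1' q) (cconj (Z q)) = 0"
      using F2.th1Zb[OF q] cnz[OF q] by (simp add: Zbc[OF q] pair_scale_right)
    then show ?thesis using F1.cov_eq[OF q, of "\<theta>1' q"] by (simp add: g_def h_def add.commute)
  qed
  have gc: "g q * c q = 1" if q: "q \<in> U" for q
    using F2.th1Z[OF q] by (simp add: Zc[OF q] pair_scale_right g_def mult.commute)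
  show ?thesis
  proof
    fix p assume p: "p \<in> U"
    have dth: "\<And>j. (\<lambda>q. \<theta> q $ j) differentiable (at p)" "\<And>j. (\<lambda>q. \<theta>1 q $ j) differentiable (at p)"
      "\<And>j. (\<lambda>q. Z q $ j) differentiable (at p)" "\<And>j. (\<lambda>q. T q $ j) differentiable (at p)"
      "\<And>j. (\<lambda>q. Z' q $ j) differentiable (at p)" "\<And>j. (\<lambda>q. \<theta>' q $ j) differentiable (at p)"
      "\<And>j. (\<lambda>q. \<theta>1' q $ j) differentiable (at p)" "\<And>j. (\<lambda>q. cconj (Z q) $ j) differentiable (at p)"
      using F1.sm F2.sm p field_diff field_cconj_diff by blast+
    have dlam: "lam differentiable (at p)" unfolding lam_def by (intro pair_diff dth)
    have dc: "c differentiable (at p)" unfolding c_def by (intro pair_diff dth)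
    have dg: "g differentiable (at p)" unfolding g_def by (intro pair_diff dth)
    have dh: "h differentiable (at p)" unfolding h_def by (intro pair_diff dth)
    have dth': "dform \<theta>' p v w = lam p * dform \<theta> p v w + (dfun lam p v * pair (\<theta> p) w - dfun lam p w * pair (\<theta> p) v)" for v w
    proof -
      have "\<forall>q\<in>U. \<theta>' q = lam q *s \<theta> q + (\<lambda>q. 0) q *s \<theta> q" using thl by simp
      from dform_lin[OF assms(1) p this dlam differentiable_const dth(1) dth(1)]
      show ?thesis by (simp add: dfun_const)
    qed
    have dth1': "dform \<theta>1' p v w = g p * dform \<theta>1 p v w + (dfun g p v * pair (\<theta>1 p) w - dfun g p w * pair (\<theta>1 p) v)
     + h p * dform \<theta> p v w + (dfun h p v * pair (\<theta> p) w - dfun h p w * pair (\<theta> p) v)" for v w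
      using dform_lin[OF assms(1) p _ dg dh dth(2) dth(1)] th1' by blast
    define l where "l = levi \<theta> Z p"
    define cp where "cp = c p"
    define Zp where "Zp = Z p"
    define Zbp where "Zbp = cconj (Z p)"
    have zb: "cconj Zp = Zbp" by (simp add: Zp_def Zbp_def)
    note defs = l_def[symmetric] cp_def[symmetric] Zp_def[symmetric] Zbp_def[symmetric] zb
    have levi': "levi \<theta>' Z' p = cp * cnj cp * lam p * l"
      unfolding levi_def Zbc[OF p] Zc[OF p]
      using F1.thZ[OF p] F1.thZb[OF p] F1.dthZZb[OF p]
      by (simp add: dform_scale1 dform_scale2 dth' defs cconj_scale pair_scale_right) (simp add: algebra_simps)
    have dlamb: "dfun lam p Zbp = cnj (dfun lam p Zp)"
    proof -
      have "dfun lam p Zbp = dfun (\<lambda>q. cnj (lam q)) p (cconj Zp)"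
        unfolding Zbp_def Zp_def by (rule dfun_local[OF assms(1) p]) (simp add: lam_real)
      also have "\<dots> = cnj (dfun lam p Zp)" by (rule dfun_cnj[OF dlam])
      finally show ?thesis .
    qed
    define a where "a = dfun lam p Zp"
    define m where "m = pair (\<theta>1 p) (T' p)"
    have lnz: "l \<noteq> 0" "cnj l = l" using F1.levi_nz[OF p] F1.levi_cnj[OF p] by (simp_all add: l_def)
    have lamnz: "lam p \<noteq> 0" "cnj (lam p) = lam p" using lam_nz[OF p] lam_real[OF p] by simp_all
    have thT': "pair (\<theta> p) (T' p) = 1 / lam p"
      using F2.thT[OF p] thl[OF p] lam_nz[OF p] by (simp add: pair_scale_left field_simps)
    have mb: "pair (cconj (\<theta>1 p)) (T' p) = cnj m"
      unfolding m_def using F2.T_real[OF p] by (simp add: pair_cconj_left)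
    have T'dec: "T' p = (1/lam p) *s T p + m *s Zp + cnj m *s Zbp"
      using F1.decompv[OF p, of "T' p"] unfolding thT' mb by (simp add: m_def Zp_def Zbp_def)
    have dZZ: "dform \<theta> p Zp Zp = 0" using dform_antisym[of \<theta> p Zp Zp] by simp
    have dZbZ: "dform \<theta> p Zbp Zp = - (\<i> * l)"
      using dform_antisym[of \<theta> p Zbp Zp] F1.dthZZb[OF p] by (simp add: defs)
    have reeb0: "lam p * (cnj m * (- (\<i> * l))) - a / lam p = 0"
    proof -
      have "0 = dform \<theta>' p (T' p) Zp" using F2.reeb[OF p, of Zp] by simp
      also have "\<dots> = lam p * dform \<theta> p (T' p) Zp - a / lam p"
        unfolding dth' using F1.thZ[OF p] thT' by (simp add: defs a_def)
      also have "dform \<theta> p (T' p) Zp = cnj m * (- (\<i> * l))"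
        unfolding T'dec using F1.reeb[OF p] dZZ dZbZ by (simp add: dform_add1 dform_scale1 defs)
      finally show ?thesis by simp
    qed
    have r: "- (\<i> * (l * (cnj m * (lam p * lam p)))) = a" using reeb0 lnz lamnz by (simp add: field_simps)
    have "\<i> * a = \<i> * (- (\<i> * (l * (cnj m * (lam p * lam p)))))" using r by simp
    also have "\<dots> = l * (cnj m * (lam p * lam p))" by (simp add: mult.assoc[symmetric])
    finally have cm: "cnj m = \<i> * a / (lam p * lam p * l)"
      using lnz lamnz by (simp add: field_simps)
    have mm: "m = - \<i> * cnj a / (lam p * lam p * l)"
      using arg_cong[OF cm, of cnj] lnz lamnz by simp
    have gp: "g p = 1 / cp" using gc[OF p] cnz[OF p] by (simp add: cp_def field_simps)
    have hv: "h p = - lam p * g p * m"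
    proof -
      have "0 = pair (\<theta>1' p) (T' p)" using F2.th1T[OF p] by simp
      also have "\<dots> = g p * m + h p / lam p"
        unfolding th1'[OF p] by (simp add: pair_add_left pair_scale_left thT' m_def)
      finally show ?thesis using lamnz by (simp add: field_simps eq_neg_iff_add_eq_0)
    qed
    have ch: "cp * h p = \<i> * cnj a / (lam p * l)"
      unfolding hv mm gp using cnz[OF p] lnz lamnz by (simp add: cp_def field_simps)
    have dgZb: "dfun g p Zbp = - dfun c p Zbp / (cp * cp)"
    proof -
      have "0 = dfun (\<lambda>q. 1) p Zbp" by (simp add: dfun_const)
      also have "\<dots> = dfun (\<lambda>q. g q * c q) p Zbp" by (rule dfun_local[OF assms(1) p]) (simp add: gc)
      also have "\<dots> = g p * dfun c p Zbp + dfun g p Zbp * cp" by (simp add: dfun_mult[OF dg dc] cp_def)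
      finally show ?thesis using gp cnz[OF p] by (simp add: cp_def field_simps eq_neg_iff_add_eq_0 add.commute)
    qed
    define W where "W = pair (\<omega> p) Zbp"
    define Zbcd where "Zbcd = dfun c p Zbp"
    have omega': "pair (\<omega>' p) (cconj (Z' p)) = cnj cp * (W + Zbcd / cp - cnj a / lam p)"
    proof -
      have "pair (\<omega>' p) (cconj (Z' p)) = dform \<theta>1' p (Z' p) (cconj (Z' p))" by (rule F2.omega_eq[OF p])
      also have "\<dots> = cp * cnj cp * (g p * W - dfun g p Zbp + h p * (\<i> * l))"
        unfolding Zbc[OF p] unfolding Zc[OF p] dform_scale1 dform_scale2 dth1'
        using F1.th1Z[OF p] F1.th1Zb[OF p] F1.thZ[OF p] F1.thZb[OF p] F1.dthZZb[OF p] F1.omega_eq[OF p]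
        by (simp add: defs W_def algebra_simps)
      also have "\<dots> = cnj cp * (W + Zbcd / cp + \<i> * l * (cp * h p))"
        unfolding dgZb gp Zbcd_def using cnz[OF p] by (simp add: cp_def field_simps)
      also have "\<dots> = cnj cp * (W + Zbcd / cp - cnj a / lam p)"
        unfolding ch using lnz lamnz by (simp add: field_simps)
      finally show ?thesis .
    qed
    define cu where "cu = (\<lambda>q. complex_of_real (u q))"
    define Zb where "Zb = (\<lambda>q. cconj (Z q))"
    define Zb' where "Zb' = (\<lambda>q. cconj (Z' q))"
    have dZu: "vf Z cu differentiable (at p)"
      using vf_diff[OF dth(3)] smooth_on_partial_diff[OF assms(7) p] by (simp add: cu_def)
    have dZbu: "vf Zb cu differentiable (at p)"
      using vf_diff[OF dth(8)] smooth_on_partial_diff[OF assms(7) p] by (simp add: cu_def Zb_def)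
    have vZ': "\<forall>q\<in>U. vf Z' cu q = c q * vf Z cu q" by (simp add: vf_def Zc dfun_scale)
    have vZb': "\<forall>q\<in>U. vf Zb' cu q = cnj (c q) * vf Zb cu q" by (simp add: vf_def Zbc dfun_scale Zb_def Zb'_def)
    have vZbZ: "vf Zb (vf Z cu) p = dfun (vf Z cu) p Zbp"
      using vf_def[of Zb "vf Z cu" p] by (simp add: Zb_def Zbp_def)
    have vZZb: "vf Z (vf Zb cu) p = dfun (vf Zb cu) p Zp"
      using vf_def[of Z "vf Zb cu" p] by (simp add: Zp_def)
    have dcc: "(\<lambda>q. cnj (c q)) differentiable (at p)" using dc by (simp add: differentiable_cnj_iff)
    have X11: "vf Zb' (vf Z' cu) p = cnj cp * (cp * vf Zb (vf Z cu) p + Zbcd * vf Z cu p)"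
    proof -
      have "vf Zb' (vf Z' cu) p = dfun (vf Z' cu) p (cnj cp *s Zbp)"
        by (simp add: vf_def Zb'_def Zbc[OF p] cp_def Zbp_def)
      also have "\<dots> = dfun (\<lambda>q. c q * vf Z cu q) p (cnj cp *s Zbp)"
        by (rule dfun_local[OF assms(1) p vZ'])
      also have "\<dots> = cnj cp * (cp * vf Zb (vf Z cu) p + Zbcd * vf Z cu p)"
        by (simp add: dfun_scale dfun_mult[OF dc dZu] vZbZ Zbcd_def cp_def)
      finally show ?thesis .
    qed
    have Y11: "vf Z' (vf Zb' cu) p = cp * (cnj cp * vf Z (vf Zb cu) p + cnj Zbcd * vf Zb cu p)"
    proof -
      have "vf Z' (vf Zb' cu) p = dfun (vf Zb' cu) p (cp *s Zp)"
        by (simp add: vf_def Zc[OF p] cp_def Zp_def)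
      also have "\<dots> = dfun (\<lambda>q. cnj (c q) * vf Zb cu q) p (cp *s Zp)"
        by (rule dfun_local[OF assms(1) p vZb'])
      also have "\<dots> = cp * (cnj cp * vf Z (vf Zb cu) p + dfun (\<lambda>q. cnj (c q)) p Zp * vf Zb cu p)"
        using dc by (simp add: dfun_scale dfun_mult[OF dcc dZbu] vZZb cp_def)
      also have "dfun (\<lambda>q. cnj (c q)) p Zp = cnj Zbcd"
        using dfun_cnj[OF dc, of Zbp] by (simp add: Zbcd_def Zbp_def Zp_def)
      finally show ?thesis .
    qed
    define W' where "W' = pair (\<omega>' p) (cconj (Z' p))"
    define X where "X = vf Zb (vf Z cu) p"
    define Y where "Y = vf Z (vf Zb cu) p"
    define u1 where "u1 = vf Z cu p"
    define u1b where "u1b = vf Zb cu p"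
    have S': "sublaplacian Z' \<theta>' \<omega>' cu p =
      - ((cp * (cnj cp * Y + cnj Zbcd * u1b) - cnj W' * (cnj cp * u1b)) / (cp * cnj cp * lam p * l)
               + (cnj cp * (cp * X + Zbcd * u1) - W' * (cp * u1)) / (cp * cnj cp * lam p * l))"
    proof -
      have a1: "vf (\<lambda>q. cconj (Z' q)) (vf Z' cu) p = cnj cp * (cp * X + Zbcd * u1)"
        using X11 by (simp add: Zb'_def X_def u1_def)
      have a2: "vf Z' (vf (\<lambda>q. cconj (Z' q)) cu) p = cp * (cnj cp * Y + cnj Zbcd * u1b)"
        using Y11 by (simp add: Zb'_def Y_def u1b_def)
      have a3: "vf Z' cu p = cp * u1" using vZ' p by (simp add: cp_def u1_def)
      have a4: "vf (\<lambda>q. cconj (Z' q)) cu p = cnj cp * u1b" using vZb' p by (simp add: cp_def u1b_def Zb'_def)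
      have a5: "pair (cconj (\<omega>' p)) (Z' p) = cnj W'" by (simp add: pair_cconj_left W'_def)
      show ?thesis unfolding sublaplacian_def Let_def a1 a2 a3 a4 a5 levi' W'_def[symmetric] by simp
    qed
    have S: "sublaplacian Z \<theta> \<omega> cu p = - ((Y - cnj W * u1b) / l + (X - W * u1) / l)"
    proof -
      have a5: "pair (cconj (\<omega> p)) (Z p) = cnj W" by (simp add: pair_cconj_left W_def Zbp_def)
      show ?thesis unfolding sublaplacian_def Let_def a5
        by (simp add: X_def Y_def u1_def u1b_def Zb_def W_def Zbp_def l_def)
    qed
    have key: "\<i>/2 * (cnj cp * cnj (h p) * u1b - cp * h p * u1) + lam p * sublaplacian Z' \<theta>' \<omega>' cu p / 2
        = sublaplacian Z \<theta> \<omega> cu p / 2"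
      unfolding S S' by (rule alg[OF lnz(1) lamnz(1) _ lnz(2) lamnz(2) ch]) (use cnz[OF p] omega' W'_def cp_def in auto)
    have gc1: "cp * g p = 1" using gc[OF p] by (simp add: cp_def mult.commute)
    have E1: "dcCR Z' \<theta>' \<theta>1' \<omega>' u p = (\<i> / 2) *s ((cnj cp * u1b) *s (cnj (g p) *s cconj (\<theta>1 p) + cnj (h p) *s \<theta> p)
       - (cp * u1) *s (g p *s \<theta>1 p + h p *s \<theta> p)) + (sublaplacian Z' \<theta>' \<omega>' cu p / 2) *s (lam p *s \<theta> p)"
    proof -
      have b1: "vf Z' cu p = cp * u1" using vZ' p by (simp add: cp_def u1_def)
      have b2: "vf (\<lambda>q. cconj (Z' q)) cu p = cnj cp * u1b" using vZb' p by (simp add: cp_def u1b_def Zb'_def)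
      have b3: "cconj (g p *s \<theta>1 p + h p *s \<theta> p) = cnj (g p) *s cconj (\<theta>1 p) + cnj (h p) *s \<theta> p"
        by (simp add: cconj_add cconj_scale F1.th_real[OF p])
      show ?thesis unfolding dcCR_def Let_def cu_def[symmetric] b1 b2 b3 th1'[OF p] thl[OF p] ..
    qed
    have E0: "dcCR Z \<theta> \<theta>1 \<omega> u p = (\<i> / 2) *s (u1b *s cconj (\<theta>1 p) - u1 *s \<theta>1 p) + (sublaplacian Z \<theta> \<omega> cu p / 2) *s \<theta> p"
      unfolding dcCR_def Let_def cu_def[symmetric] by (simp add: u1_def u1b_def Zb_def)
    show "dcCR Z \<theta> \<theta>1 \<omega> u p = dcCR Z' \<theta>' \<theta>1' \<omega>' u p"
      unfolding E0 E1 vec_eq_iff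
    proof
      fix j
      show "((\<i> / 2) *s (u1b *s cconj (\<theta>1 p) - u1 *s \<theta>1 p) + (sublaplacian Z \<theta> \<omega> cu p / 2) *s \<theta> p) $ j = 
        ((\<i> / 2) *s ((cnj cp * u1b) *s (cnj (g p) *s cconj (\<theta>1 p) + cnj (h p) *s \<theta> p)
       - (cp * u1) *s (g p *s \<theta>1 p + h p *s \<theta> p)) + (sublaplacian Z' \<theta>' \<omega>' cu p / 2) *s (lam p *s \<theta> p)) $ j"
        unfolding vector_add_component vector_minus_component vector_smult_component
        by (rule alg2[OF gc1 key, of "cconj (\<theta>1 p) $ j" "\<theta> p $ j" "\<theta>1 p $ j", symmetric])
    qed
  qed
qed

end
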